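(* Let $G$ be a graph and let $S$ be the set of simplicial vertices of $G$. Then $S$ is a general position set of $G$.
   Context: All graphs are finite, simple and connected. A vertex is simplicial if its neighbors induce a complete subgraph. A set $S$ of vertices is a general position set of $G$ if no three vertices of $S$ lie on a common geodesic (shortest path) of $G$. *)

theory Defs
  imports Main
begin

definition simple_graph :: "'a set \<Rightarrow> ('a \<Rightarrow> 'a \<Rightarrow> bool) \<Rightarrow> bool" where
  "simple_graph V E \<longleftrightarrow> finite V \<and> V \<noteq> {} \<and>
     (\<forall>u v. E u v \<longrightarrow> u \<in> V \<and> v \<in> V) \<and>
     (\<forall>u v. E u v \<longrightarrow> E v u) \<and> (\<forall>u. \<not> E u u)"

definition walk :: "'a set \<Rightarrow> ('a \<Rightarrow> 'a \<Rightarrow> bool) \<Rightarrow> 'a list \<Rightarrow> bool" where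
  "walk V E xs \<longleftrightarrow> xs \<noteq> [] \<and> set xs \<subseteq> V \<and>
     (\<forall>i. Suc i < length xs \<longrightarrow> E (xs ! i) (xs ! Suc i))"

definition walk_betw :: "'a set \<Rightarrow> ('a \<Rightarrow> 'a \<Rightarrow> bool) \<Rightarrow> 'a \<Rightarrow> 'a list \<Rightarrow> 'a \<Rightarrow> bool" where
  "walk_betw V E u xs v \<longleftrightarrow> walk V E xs \<and> hd xs = u \<and> last xs = v"

definition connected_graph :: "'a set \<Rightarrow> ('a \<Rightarrow> 'a \<Rightarrow> bool) \<Rightarrow> bool" where
  "connected_graph V E \<longleftrightarrow> (\<forall>u\<in>V. \<forall>v\<in>V. \<exists>xs. walk_betw V E u xs v)"

definition dist :: "'a set \<Rightarrow> ('a \<Rightarrow> 'a \<Rightarrow> bool) \<Rightarrow> 'a \<Rightarrow> 'a \<Rightarrow> nat" where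
  "dist V E u v = (LEAST n. \<exists>xs. walk_betw V E u xs v \<and> length xs = Suc n)"

text \<open>A geodesic: a walk between u and v whose number of edges equals d(u,v)
  (such a walk is automatically a path).\<close>
definition geodesic :: "'a set \<Rightarrow> ('a \<Rightarrow> 'a \<Rightarrow> bool) \<Rightarrow> 'a list \<Rightarrow> bool" where
  "geodesic V E xs \<longleftrightarrow> walk V E xs \<and> length xs = Suc (dist V E (hd xs) (last xs))"

definition general_position_set :: "'a set \<Rightarrow> ('a \<Rightarrow> 'a \<Rightarrow> bool) \<Rightarrow> 'a set \<Rightarrow> bool" where
  "general_position_set V E S \<longleftrightarrow> S \<subseteq> V \<and>
     (\<forall>x\<in>S. \<forall>y\<in>S. \<forall>z\<in>S. x \<noteq> y \<and> y \<noteq> z \<and> x \<noteq> z \<longrightarrow>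
        \<not> (\<exists>P. geodesic V E P \<and> {x, y, z} \<subseteq> set P))"

definition neighbors :: "'a set \<Rightarrow> ('a \<Rightarrow> 'a \<Rightarrow> bool) \<Rightarrow> 'a \<Rightarrow> 'a set" where
  "neighbors V E v = {u \<in> V. E v u}"

definition simplicial :: "'a set \<Rightarrow> ('a \<Rightarrow> 'a \<Rightarrow> bool) \<Rightarrow> 'a \<Rightarrow> bool" where
  "simplicial V E v \<longleftrightarrow> v \<in> V \<and>
     (\<forall>x\<in>neighbors V E v. \<forall>y\<in>neighbors V E v. x \<noteq> y \<longrightarrow> E x y)"

end

theory Submission
  imports Defs
begin

lemma walk_take: "walk V E xs \<Longrightarrow> 0 < i \<Longrightarrow> walk V E (take i xs)"
  unfolding walk_def
  by (auto dest: in_set_takeD)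

lemma walk_drop: "walk V E xs \<Longrightarrow> i < length xs \<Longrightarrow> walk V E (drop i xs)"
  unfolding walk_def
  by (auto dest: in_set_dropD)

lemma walk_app:
  assumes "walk V E xs" "walk V E ys" "E (last xs) (hd ys)"
  shows "walk V E (xs @ ys)"
  unfolding walk_def
proof (intro conjI allI impI)
  show "xs @ ys \<noteq> []" using assms(1) by (simp add: walk_def)
  show "set (xs @ ys) \<subseteq> V" using assms(1,2) by (simp add: walk_def)
  fix i assume i: "Suc i < length (xs @ ys)"
  show "E ((xs @ ys) ! i) ((xs @ ys) ! Suc i)"
  proof (cases "Suc i < length xs")
    case True then show ?thesis using assms(1) by (simp add: walk_def nth_append)
  next
    case False
    show ?thesis
    proof (cases "i < length xs")
      case True
      then have "i = length xs - 1" using False by simp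
      moreover have "xs \<noteq> []" "ys \<noteq> []" using assms by (auto simp: walk_def)
      ultimately show ?thesis using assms(3) True False
        by (simp add: nth_append last_conv_nth hd_conv_nth)
    next
      case f2: False
      then have "Suc (i - length xs) < length ys" using i by simp
      then have "E (ys ! (i - length xs)) (ys ! Suc (i - length xs))"
        using assms(2) by (simp add: walk_def)
      then show ?thesis using f2 False by (simp add: nth_append Suc_diff_le)
    qed
  qed
qed

lemma dist_le:
  assumes "walk_betw V E u xs v"
  shows "dist V E u v \<le> length xs - 1"
proof -
  have "xs \<noteq> []" using assms by (simp add: walk_betw_def walk_def)
  then have "length xs = Suc (length xs - 1)" by simp
  then show ?thesis unfolding dist_def using assms by (intro Least_le) blast
qed

lemma interior_not_simplicial:
  assumes g: "simple_graph V E" and P: "geodesic V E P"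
    and i: "0 < i" "Suc i < length P"
  shows "\<not> simplicial V E (P ! i)"
proof
  assume s: "simplicial V E (P ! i)"
  have w: "walk V E P" and len: "length P = Suc (dist V E (hd P) (last P))"
    using P by (auto simp: geodesic_def)
  define a where "a = P ! (i - 1)"
  define b where "b = P ! Suc i"
  obtain i' where ii: "i = Suc i'" using i(1) by (cases i) auto
  have Ea: "E a (P ! i)"
  proof -
    have "Suc i' < length P" using i ii by simp
    then have "E (P ! i') (P ! Suc i')" using w unfolding walk_def by blast
    then show ?thesis unfolding a_def ii by simp
  qed
  have Eb: "E (P ! i) b" using w i unfolding walk_def b_def by blast
  have sym: "\<And>u v. E u v \<Longrightarrow> E v u" and inV: "\<And>u v. E u v \<Longrightarrow> u \<in> V \<and> v \<in> V"
    using g by (auto simp: simple_graph_def)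
  have an: "a \<in> neighbors V E (P ! i)" using Ea sym inV by (auto simp: neighbors_def)
  have bn: "b \<in> neighbors V E (P ! i)" using Eb inV by (auto simp: neighbors_def)
  have wt: "walk V E (take i P)" using walk_take[OF w i(1)] .
  have wd: "walk V E (drop (Suc i) P)" using walk_drop[OF w] i by simp
  have lt: "last (take i P) = a" using i unfolding a_def ii
    by (subst last_conv_nth) (auto simp: min_def)
  have hdd: "hd (drop (Suc i) P) = b" using i unfolding b_def
    by (simp add: hd_drop_conv_nth)
  have hdt: "hd (take i P) = hd P" using i by simp
  have ld: "last (drop (Suc i) P) = last P" using i by simp
  obtain Q where Q: "walk_betw V E (hd P) Q (last P)" and lQ: "length Q < length P"
  proof (cases "a = b")
    case True
    show ?thesis
    proof (cases "Suc (Suc i) < length P")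
      case True2: True
      have wd2: "walk V E (drop (Suc (Suc i)) P)" using walk_drop[OF w True2] .
      have "hd (drop (Suc (Suc i)) P) = P ! Suc (Suc i)" using True2 by (simp add: hd_drop_conv_nth)
      moreover have "E b (P ! Suc (Suc i))" using w True2 unfolding walk_def b_def by blast
      ultimately have "walk V E (take i P @ drop (Suc (Suc i)) P)"
        using walk_app[OF wt wd2] lt True by simp
      moreover have "hd (take i P @ drop (Suc (Suc i)) P) = hd P" using i hdt wt
        by (simp add: walk_def)
      moreover have "last (take i P @ drop (Suc (Suc i)) P) = last P" using True2 by simp
      ultimately show ?thesis using that[of "take i P @ drop (Suc (Suc i)) P"] i True2
        by (simp add: walk_betw_def)
    next
      case False
      then have "Suc i = length P - 1" using i by simp
      then have "last P = b" unfolding b_def using i by (metis last_conv_nth list.size(3) not_less0)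
      then have "walk_betw V E (hd P) (take i P) (last P)" using wt hdt lt True
        by (simp add: walk_betw_def)
      then show ?thesis using that i by simp
    qed
  next
    case False
    then have "E a b" using s an bn by (simp add: simplicial_def)
    then have "walk V E (take i P @ drop (Suc i) P)" using walk_app[OF wt wd] lt hdd by simp
    moreover have "hd (take i P @ drop (Suc i) P) = hd P" using i hdt wt
      by (simp add: walk_def)
    moreover have "last (take i P @ drop (Suc i) P) = last P" using i by simp
    ultimately show ?thesis using that[of "take i P @ drop (Suc i) P"] i
      by (simp add: walk_betw_def)
  qed
  have "Q \<noteq> []" using Q by (simp add: walk_betw_def walk_def)
  with dist_le[OF Q] lQ len show False by (cases Q) auto
qed

theorem lemma3p5:
  fixes V :: "'a set" and E :: "'a \<Rightarrow> 'a \<Rightarrow> bool"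
  assumes "simple_graph V E" and "connected_graph V E"
  shows "general_position_set V E {v \<in> V. simplicial V E v}"
  unfolding general_position_set_def
proof (intro conjI ballI impI notI)
  show "{v \<in> V. simplicial V E v} \<subseteq> V" by auto
  fix x y z
  assume x: "x \<in> {v \<in> V. simplicial V E v}" and y: "y \<in> {v \<in> V. simplicial V E v}"
    and z: "z \<in> {v \<in> V. simplicial V E v}"
    and d: "x \<noteq> y \<and> y \<noteq> z \<and> x \<noteq> z"
    and ex: "\<exists>P. geodesic V E P \<and> {x, y, z} \<subseteq> set P"
  then obtain P where P: "geodesic V E P" and sub: "{x, y, z} \<subseteq> set P" by blast
  obtain i where i: "i < length P" "P ! i = x" using sub by (auto simp: in_set_conv_nth)
  obtain j where j: "j < length P" "P ! j = y" using sub by (auto simp: in_set_conv_nth)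
  obtain k where k: "k < length P" "P ! k = z" using sub by (auto simp: in_set_conv_nth)
  have "i \<noteq> j" "j \<noteq> k" "i \<noteq> k" using d i j k by auto
  then have "\<exists>m. (m = i \<or> m = j \<or> m = k) \<and> 0 < m \<and> Suc m < length P" using i j k by arith
  then obtain m where m: "m = i \<or> m = j \<or> m = k" "0 < m" "Suc m < length P" by blast
  have "simplicial V E (P ! m)" using m(1)
  proof (elim disjE)
    assume "m = i" then show ?thesis using x i by simp
  next
    assume "m = j" then show ?thesis using y j by simp
  next
    assume "m = k" then show ?thesis using z k by simp
  qed
  with interior_not_simplicial[OF assms(1) P m(2,3)] show False by simp
qed

end
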